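(* Let $n\ge 3$ and let $i\ge 0$ be an integer with $i>(n-4)(n-1)$. Then the map $\mathrm{per}$ restricts to a bijection from $\mathcal{L}_i$ onto $\mathcal{L}_{i+n-1}$.
   Context: Fix an integer $n\ge 3$. A partition is a sequence $\Lambda=(\lambda_j)_{j\ge1}$ of non-negative integers with finite support; $\mathrm{wt}(\Lambda)=\sum_j j\lambda_j$; $\mathrm{Part}(k)$ is the set of partitions with $\lambda_j=0$ for $j>k$. Write $x^\Lambda=\prod_j x_j^{\lambda_j}$, $\deg(x^\Lambda)=\sum_j\lambda_j$. $\mathcal{B}=\{x^\Lambda\partial_k : 1\le k\le n,\ \Lambda\in\mathrm{Part}(k-1)\}$ (formal monomials times the symbol $\partial_k$). For an integer $i\ge-1$, let $r_i\in\{1,\dots,n-1\}$ with $i\equiv r_i\pmod{n-1}$ and $h_i=\lfloor (i-1)/(n-1)\rfloor+1$. Define $\mathrm{WD}(x^\Lambda\partial_k)=\mathrm{wt}(\Lambda)-\deg(x^\Lambda)+n-k$ and $\mathrm{lev}_i(x^\Lambda\partial_k)=h_i\,\mathrm{WD}(x^\Lambda\partial_k)+\deg(x^\Lambda)-1$. For $i\ge-1$, $\mathcal{N}_i=\{b\in\mathcal{B}: \mathrm{lev}_j(b)\le j\text{ for some integer } -1\le j\le i\}$, and $\mathcal{L}_i=\mathcal{N}_i\setminus\mathcal{N}_{i-1}$ for $i\ge0$. For $x^\Lambda\partial_k\in\mathcal{B}$ with $\mathrm{WD}(x^\Lambda\partial_k)\le n-1$, the period function is $\mathrm{per}(x^\Lambda\partial_k)=x_1^{\,n-1-\mathrm{WD}(x^\Lambda\partial_k)}x^\Lambda\partial_k$.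 *)

theory Defs
  imports Main
begin

text \<open>A basis element x^Lambda d_k is represented as a pair (Lambda, k), where
  Lambda :: nat => nat gives the exponents lambda_j (j >= 1); index 0 is unused (always 0).\<close>

type_synonym bas = "(nat \<Rightarrow> nat) \<times> nat"

definition Bset :: "nat \<Rightarrow> bas set" where
  "Bset n = {(lam, k). 1 \<le> k \<and> k \<le> n \<and> (\<forall>j. (j = 0 \<or> k \<le> j) \<longrightarrow> lam j = 0)}"

definition wt :: "(nat \<Rightarrow> nat) \<Rightarrow> nat \<Rightarrow> nat" where
  "wt lam k = (\<Sum>j\<in>{1..<k}. j * lam j)"

definition dg :: "(nat \<Rightarrow> nat) \<Rightarrow> nat \<Rightarrow> nat" where
  "dg lam k = (\<Sum>j\<in>{1..<k}. lam j)"

definition WD :: "nat \<Rightarrow> bas \<Rightarrow> int" where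
  "WD n b = (case b of (lam, k) \<Rightarrow> int (wt lam k) - int (dg lam k) + int n - int k)"

definition hh :: "nat \<Rightarrow> int \<Rightarrow> int" where
  "hh n i = (i - 1) div (int n - 1) + 1"

definition lev :: "nat \<Rightarrow> int \<Rightarrow> bas \<Rightarrow> int" where
  "lev n i b = hh n i * WD n b + int (dg (fst b) (snd b)) - 1"

definition Nset :: "nat \<Rightarrow> int \<Rightarrow> bas set" where
  "Nset n i = {b \<in> Bset n. \<exists>j. -1 \<le> j \<and> j \<le> i \<and> lev n j b \<le> j}"

definition Lset :: "nat \<Rightarrow> int \<Rightarrow> bas set" where
  "Lset n i = Nset n i - Nset n (i - 1)"

text \<open>per(x^Lambda d_k) = x_1^(n-1-WD) x^Lambda d_k (meaningful when WD <= n-1).\<close>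
definition per :: "nat \<Rightarrow> bas \<Rightarrow> bas" where
  "per n b = (case b of (lam, k) \<Rightarrow>
     (lam(1 := lam 1 + nat (int n - 1 - WD n b)), k))"

end

theory Submission
  imports Defs
begin

lemma ivl_split: "2 \<le> k \<Longrightarrow> {1..<k} = insert (1::nat) {2..<k}" by auto

lemma sum_split: "2 \<le> k \<Longrightarrow> sum f {1..<k} = f (1::nat) + sum f {2..<k}"
proof -
  assume "2 \<le> k"
  then have e: "{1..<k} = insert 1 {2..<k}" by (rule ivl_split)
  show ?thesis by (simp only: e, subst sum.insert, auto)
qed

lemma dg_split: "2 \<le> k \<Longrightarrow> dg lam k = lam 1 + (\<Sum>j\<in>{2..<k}. lam j)"
  unfolding dg_def by (rule sum_split)
lemma wt_split: "2 \<le> k \<Longrightarrow> wt lam k = lam 1 + (\<Sum>j\<in>{2..<k}. j * lam j)"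
  unfolding wt_def by (subst sum_split, auto)

lemma sum_upd1: "(\<Sum>j::nat\<in>{2..<k}. f ((lam(1:=x)) j)) = (\<Sum>j\<in>{2..<k}. f (lam j))"
  by (rule sum.cong) auto

lemma dg_upd: "2 \<le> k \<Longrightarrow> int (dg (lam(1:=x)) k) = int (dg lam k) - int (lam 1) + int x"
  using sum_upd1[of "\<lambda>y. y" lam x k] by (simp add: dg_split)
lemma wt_upd: "2 \<le> k \<Longrightarrow> int (wt (lam(1:=x)) k) = int (wt lam k) - int (lam 1) + int x"
proof -
  assume k: "2 \<le> k"
  have "(\<Sum>j\<in>{2..<k}. j * (lam(1:=x)) j) = (\<Sum>j\<in>{2..<k}. j * lam j)"
    by (rule sum.cong) auto
  then show ?thesis using k by (simp add: wt_split)
qed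

lemma WD_upd: "2 \<le> k \<Longrightarrow> WD n (lam(1:=x), k) = WD n (lam, k)"
  unfolding WD_def using dg_upd[of k lam x] wt_upd[of k lam x] by simp

lemma dg_le_wt: "dg lam k \<le> wt lam k"
  unfolding dg_def wt_def by (rule sum_mono) auto

lemma wt_le: "wt lam k \<le> (k - 1) * dg lam k"
  unfolding dg_def wt_def sum_distrib_left by (rule sum_mono) auto

lemma wt_ge: "2 * dg lam k \<le> wt lam k + lam 1"
proof (cases "2 \<le> k")
  case True
  have "(\<Sum>j\<in>{2..<k}. 2 * lam j) \<le> (\<Sum>j\<in>{2..<k}. j * lam j)"
    by (rule sum_mono) auto
  then show ?thesis using True by (simp add: dg_split wt_split sum_distrib_left)
next
  case False
  then have "{1..<k} = {}" by auto
  then show ?thesis by (simp add: dg_def wt_def)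
qed

lemma WD_nonneg: "b \<in> Bset n \<Longrightarrow> 0 \<le> WD n b"
  using dg_le_wt[of "fst b" "snd b"] by (auto simp: WD_def Bset_def split: prod.splits)

lemma le_zdiv_iff: "0 < N \<Longrightarrow> (q \<le> x div N) = (q*N \<le> x)" for N q x :: int
proof -
  assume N: "0 < N"
  have "(x + (-q)*N) div N = x div N + (-q)" using N by (simp only: div_mult_self1)
  then have "(0 \<le> (x + (-q)*N) div N) = (0 \<le> x + (-q)*N)" using pos_imp_zdiv_nonneg_iff[OF N] by blast
  then show ?thesis using \<open>(x + (-q)*N) div N = x div N + (-q)\<close> by simp
qed

lemma zdiv_eqI: "0 < N \<Longrightarrow> q*N \<le> x \<Longrightarrow> x < (q+1)*N \<Longrightarrow> x div N = q" for N q x :: int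
  using le_zdiv_iff[of N q x] le_zdiv_iff[of N "q+1" x] by linarith

lemma hh_shift: "n \<ge> 3 \<Longrightarrow> hh n (j + (int n - 1)) = hh n j + 1"
proof -
  assume "n \<ge> 3"
  then have N: "int n - 1 > 0" by simp
  have "j + (int n - 1) - 1 = (j - 1) + 1 * (int n - 1)" by simp
  then have "(j + (int n - 1) - 1) div (int n - 1) = (j - 1) div (int n - 1) + 1"
    using N by (simp only: div_mult_self1)
  then show ?thesis unfolding hh_def by simp
qed

lemma hh_m1: "n \<ge> 3 \<Longrightarrow> hh n (-1) = 0"
proof -
  assume "n \<ge> 3"
  then have "(-1 - 1) div (int n - 1) = -1" by (intro zdiv_eqI) auto
  then show ?thesis unfolding hh_def by simp
qed

lemma hh_0: "n \<ge> 3 \<Longrightarrow> hh n 0 = 0"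
proof -
  assume "n \<ge> 3"
  then have "(0 - 1) div (int n - 1) = -1" by (intro zdiv_eqI) auto
  then show ?thesis unfolding hh_def by simp
qed

lemma hh_pos: "n \<ge> 3 \<Longrightarrow> 1 \<le> j \<Longrightarrow> 1 \<le> hh n j \<and> j \<le> hh n j * (int n - 1)"
proof -
  assume n: "n \<ge> 3" and j: "1 \<le> j"
  then have N: "int n - 1 > 0" by simp
  have a: "0 \<le> (j - 1) div (int n - 1)" using le_zdiv_iff[OF N, of 0 "j-1"] j by simp
  have b: "\<not> ((j - 1) div (int n - 1) + 1 \<le> (j - 1) div (int n - 1))" by simp
  then have "\<not> (((j - 1) div (int n - 1) + 1) * (int n - 1) \<le> j - 1)" using le_zdiv_iff[OF N] by blast
  then show ?thesis using a unfolding hh_def by simp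
qed

lemma hh_lb: "n \<ge> 3 \<Longrightarrow> -(int n - 1) - 1 \<le> j \<Longrightarrow> -1 \<le> hh n j"
proof -
  assume n: "n \<ge> 3" and j: "-(int n - 1) - 1 \<le> j"
  then have N: "int n - 1 > 0" by simp
  have "(-2) * (int n - 1) \<le> j - 1" using n j by simp
  then have "-2 \<le> (j - 1) div (int n - 1)" using le_zdiv_iff[OF N] by blast
  then show ?thesis unfolding hh_def by simp
qed

lemma hh_neg1: "n \<ge> 3 \<Longrightarrow> hh n j \<le> -1 \<Longrightarrow> j \<le> -(int n - 1)"
proof -
  assume n: "n \<ge> 3" and j: "hh n j \<le> -1"
  then have N: "int n - 1 > 0" by simp
  have "\<not> (-1 \<le> (j - 1) div (int n - 1))" using j unfolding hh_def by simp
  then have "\<not> ((-1) * (int n - 1) \<le> j - 1)" using le_zdiv_iff[OF N] by blast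
  then show ?thesis by simp
qed

lemma hh_mult: "n \<ge> 3 \<Longrightarrow> 2 \<le> d \<Longrightarrow> hh n ((d - 1) * (int n - 1)) = d - 1"
proof -
  assume n: "n \<ge> 3" and d: "2 \<le> d"
  then have N: "int n - 1 > 0" by simp
  have "((d - 1) * (int n - 1) - 1) div (int n - 1) = d - 2"
    using N by (intro zdiv_eqI) (auto simp: algebra_simps)
  then show ?thesis unfolding hh_def by simp
qed


definition Exs :: "nat \<Rightarrow> int \<Rightarrow> int \<Rightarrow> int \<Rightarrow> bool" where
  "Exs n i W d = (\<exists>j. -1 \<le> j \<and> j \<le> i \<and> hh n j * W + d - 1 \<le> j)"

lemma Nset_iff: "b \<in> Nset n i \<longleftrightarrow> b \<in> Bset n \<and> Exs n i (WD n b) (int (dg (fst b) (snd b)))"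
  by (simp add: Nset_def Exs_def lev_def)

lemma S1: "n \<ge> 3 \<Longrightarrow> (hh n (j + (int n - 1)) * W + (d + (int n - 1) - W) - 1 \<le> j + (int n - 1))
   = (hh n j * W + d - 1 \<le> j)"
proof -
  assume n: "n \<ge> 3"
  have h: "hh n (j + (int n - 1)) = hh n j + 1" by (rule hh_shift[OF n])
  show ?thesis unfolding h by (simp add: algebra_simps)
qed

lemma S3: "n \<ge> 3 \<Longrightarrow> Exs n i W d \<Longrightarrow> Exs n (i + int n - 1) W (d + (int n - 1) - W)"
proof -
  assume n: "n \<ge> 3" and "Exs n i W d"
  then obtain j where j: "-1 \<le> j" "j \<le> i" "hh n j * W + d - 1 \<le> j" unfolding Exs_def by blast
  have "-1 \<le> j + (int n - 1)" "j + (int n - 1) \<le> i + int n - 1" using j n by auto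
  moreover have "hh n (j + (int n - 1)) * W + (d + (int n - 1) - W) - 1 \<le> j + (int n - 1)"
    using S1[OF n] j by blast
  ultimately show ?thesis unfolding Exs_def by blast
qed

lemma S2: "n \<ge> 3 \<Longrightarrow> 1 \<le> d \<Longrightarrow> 0 \<le> W \<Longrightarrow> W \<le> int n - 2 \<Longrightarrow>
   Exs n (i + int n - 1) W (d + (int n - 1) - W) \<Longrightarrow> Exs n i W d"
proof -
  assume n: "n \<ge> 3" and d: "1 \<le> d" and W: "0 \<le> W" "W \<le> int n - 2"
    and "Exs n (i + int n - 1) W (d + (int n - 1) - W)"
  then obtain j where j: "-1 \<le> j" "j \<le> i + int n - 1"
    "hh n j * W + (d + (int n - 1) - W) - 1 \<le> j" unfolding Exs_def by blast
  define j' where "j' = j - (int n - 1)"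
  have jj: "j = j' + (int n - 1)" unfolding j'_def by simp
  have P: "hh n j' * W + d - 1 \<le> j'" using j(3) S1[OF n, of j' W d] unfolding jj by blast
  have "-1 \<le> j'"
  proof (rule ccontr)
    assume "\<not> -1 \<le> j'"
    have lb: "-1 \<le> hh n j'" using hh_lb[OF n] j(1) unfolding jj by simp
    show False
    proof (cases "hh n j' \<le> -1")
      case True
      then have "hh n j' = -1" using lb by simp
      moreover have "j' \<le> -(int n - 1)" using hh_neg1[OF n True] .
      ultimately show False using P d W by simp
    next
      case False
      then have "0 \<le> hh n j' * W" using W by simp
      then show False using P d \<open>\<not> -1 \<le> j'\<close> by simp
    qed
  qed
  moreover have "j' \<le> i" using j(2) unfolding j'_def by simp
  ultimately show ?thesis using P unfolding Exs_def by blast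
qed

lemma L_props:
  assumes n: "n \<ge> 3" and i: "0 \<le> i" and b: "b \<in> Lset n i"
  shows "b \<in> Bset n \<and> 1 \<le> dg (fst b) (snd b) \<and> WD n b \<le> int n - 2"
proof -
  obtain lam k where bb: "b = (lam, k)" by (cases b)
  have B: "b \<in> Bset n" and E: "Exs n i (WD n b) (int (dg lam k))"
    and NE: "\<not> Exs n (i - 1) (WD n b) (int (dg lam k))"
    using b unfolding bb by (auto simp: Lset_def Nset_iff)
  have kn: "1 \<le> k" "k \<le> n" using B unfolding bb Bset_def by auto
  have "\<not> (hh n (-1) * WD n b + int (dg lam k) - 1 \<le> -1)"
    using NE i unfolding Exs_def by force
  then have d1: "1 \<le> dg lam k" using hh_m1[OF n] by simp
  have W: "WD n b \<le> int n - 2"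
  proof (rule ccontr)
    assume "\<not> WD n b \<le> int n - 2"
    then have Wg: "int n - 1 \<le> WD n b" by simp
    obtain j where j: "-1 \<le> j" "j \<le> i" "hh n j * WD n b + int (dg lam k) - 1 \<le> j"
      using E unfolding Exs_def by blast
    have "dg lam k \<le> 1"
    proof (cases "1 \<le> j")
      case True
      from hh_pos[OF n True] have h: "1 \<le> hh n j" "j \<le> hh n j * (int n - 1)" by auto
      have "hh n j * (int n - 1) \<le> hh n j * WD n b" using h(1) Wg by (intro mult_left_mono) auto
      then show ?thesis using j(3) h(2) by simp
    next
      case False
      then have "j = -1 \<or> j = 0" using j(1) by auto
      then show ?thesis using j(3) hh_m1[OF n] hh_0[OF n] by auto
    qed
    then have "dg lam k = 1" using d1 by simp
    moreover have "wt lam k \<le> (k - 1) * dg lam k" by (rule wt_le)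
    ultimately have "wt lam k \<le> k - 1" by simp
    then have "int (wt lam k) \<le> int k - 1" using kn by linarith
    then have "WD n b \<le> int n - 2" using kn \<open>dg lam k = 1\<close> unfolding bb WD_def by simp
    then show False using Wg by simp
  qed
  show ?thesis using B d1 W bb by simp
qed

lemma per_facts:
  assumes n: "n \<ge> 3" and B: "b \<in> Bset n" and W: "WD n b \<le> int n - 2"
  shows "per n b \<in> Bset n \<and> WD n (per n b) = WD n b \<and>
    int (dg (fst (per n b)) (snd (per n b))) = int (dg (fst b) (snd b)) + (int n - 1 - WD n b)
    \<and> snd (per n b) = snd b \<and> fst (per n b) = (fst b)(1 := fst b 1 + nat (int n - 1 - WD n b))
    \<and> 2 \<le> snd b"
proof -
  obtain lam k where bb: "b = (lam, k)" by (cases b)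
  have kn: "1 \<le> k" "k \<le> n" and z: "\<And>j. (j = 0 \<or> k \<le> j) \<Longrightarrow> lam j = 0"
    using B unfolding bb Bset_def by auto
  have k2: "2 \<le> k"
  proof (rule ccontr)
    assume "\<not> 2 \<le> k"
    then have "k = 1" using kn by simp
    then have "WD n b = int n - 1" unfolding bb WD_def wt_def dg_def by simp
    then show False using W by simp
  qed
  define x where "x = lam 1 + nat (int n - 1 - WD n b)"
  have pb: "per n b = (lam(1 := x), k)" unfolding per_def bb x_def by simp
  have "per n b \<in> Bset n" unfolding pb Bset_def using kn k2 z by auto
  moreover have "WD n (per n b) = WD n b" unfolding pb using WD_upd[OF k2, of n lam x] bb by simp
  moreover have "int (dg (fst (per n b)) (snd (per n b))) = int (dg (fst b) (snd b)) + (int n - 1 - WD n b)"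
    unfolding pb using dg_upd[OF k2, of lam x] W unfolding x_def bb by simp
  moreover have "snd (per n b) = snd b \<and> fst (per n b) = (fst b)(1 := fst b 1 + nat (int n - 1 - WD n b))"
    using pb bb x_def by simp
  ultimately show ?thesis using k2 bb by simp
qed

theorem corollary2p17:
  fixes n :: nat and i :: int
  assumes "n \<ge> 3" and "i \<ge> 0" and "i > (int n - 4) * (int n - 1)"
  shows "(\<forall>b \<in> Lset n i. WD n b \<le> int n - 1)
         \<and> bij_betw (per n) (Lset n i) (Lset n (i + int n - 1))"
proof -
  note n = assms(1)
  have part1: "\<forall>b \<in> Lset n i. WD n b \<le> int n - 1"
    using L_props[OF n assms(2)] by fastforce
  have fwd: "per n b \<in> Lset n (i + int n - 1)" if b: "b \<in> Lset n i" for b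
  proof -
    have P: "b \<in> Bset n" "1 \<le> dg (fst b) (snd b)" "WD n b \<le> int n - 2"
      using L_props[OF n assms(2) b] by auto
    note pf = per_facts[OF n P(1) P(3)]
    have W0: "0 \<le> WD n b" using WD_nonneg[OF P(1)] .
    have E: "Exs n i (WD n b) (int (dg (fst b) (snd b)))"
      and NE: "\<not> Exs n (i - 1) (WD n b) (int (dg (fst b) (snd b)))"
      using b by (auto simp: Lset_def Nset_iff)
    have e1: "WD n (per n b) = WD n b"
      and e2: "int (dg (fst (per n b)) (snd (per n b))) = int (dg (fst b) (snd b)) + (int n - 1 - WD n b)"
      using pf by auto
    have "Exs n (i + int n - 1) (WD n (per n b)) (int (dg (fst (per n b)) (snd (per n b))))"
      unfolding e1 e2 using S3[OF n E] by (simp add: algebra_simps)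
    moreover have "\<not> Exs n (i + int n - 1 - 1) (WD n (per n b)) (int (dg (fst (per n b)) (snd (per n b))))"
    proof
      assume "Exs n (i + int n - 1 - 1) (WD n (per n b)) (int (dg (fst (per n b)) (snd (per n b))))"
      then have "Exs n ((i - 1) + int n - 1) (WD n b) (int (dg (fst b) (snd b)) + (int n - 1) - WD n b)"
        unfolding e1 e2 by (simp add: algebra_simps)
      from S2[OF n _ W0 P(3) this] P(2) NE show False by simp
    qed
    ultimately show ?thesis unfolding Lset_def Diff_iff Nset_iff using pf by blast
  qed
  have inj: "inj_on (per n) (Lset n i)"
  proof (rule inj_onI)
    fix b1 b2 assume b1: "b1 \<in> Lset n i" and b2: "b2 \<in> Lset n i" and eq: "per n b1 = per n b2"
    have P1: "b1 \<in> Bset n" "WD n b1 \<le> int n - 2" using L_props[OF n assms(2) b1] by auto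
    have P2: "b2 \<in> Bset n" "WD n b2 \<le> int n - 2" using L_props[OF n assms(2) b2] by auto
    note pf1 = per_facts[OF n P1] and pf2 = per_facts[OF n P2]
    have WW: "WD n b1 = WD n b2" using pf1 pf2 eq by metis
    have s: "snd b1 = snd b2" using pf1 pf2 eq by metis
    have f: "(fst b1)(1 := fst b1 1 + nat (int n - 1 - WD n b1)) = (fst b2)(1 := fst b2 1 + nat (int n - 1 - WD n b1))"
      using pf1 pf2 eq WW by metis
    have "fst b1 = fst b2"
    proof
      fix j show "fst b1 j = fst b2 j"
        using fun_cong[OF f, of j] by (cases "j = 1") auto
    qed
    then show "b1 = b2" using s by (simp add: prod_eq_iff)
  qed
  have surj: "\<exists>b \<in> Lset n i. c = per n b" if c: "c \<in> Lset n (i + int n - 1)" for c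
  proof -
    have i2: "0 \<le> i + int n - 1" using assms by simp
    have P: "c \<in> Bset n" "1 \<le> dg (fst c) (snd c)" "WD n c \<le> int n - 2"
      using L_props[OF n i2 c] by auto
    obtain lam k where cc: "c = (lam, k)" by (cases c)
    have kn: "1 \<le> k" "k \<le> n" and z: "\<And>j. (j = 0 \<or> k \<le> j) \<Longrightarrow> lam j = 0"
      using P(1) unfolding cc Bset_def by auto
    have E: "Exs n (i + int n - 1) (WD n c) (int (dg lam k))"
      and NE: "\<not> Exs n (i + int n - 1 - 1) (WD n c) (int (dg lam k))"
      using c unfolding cc by (auto simp: Lset_def Nset_iff)
    have k2: "2 \<le> k" using per_facts[OF n P(1) P(3)] cc by simp
    have W0: "0 \<le> WD n c" using WD_nonneg[OF P(1)] .
    have lam1: "int n - 1 - WD n c \<le> int (lam 1)"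
    proof (rule ccontr)
      assume a: "\<not> ?thesis"
      have "2 * dg lam k \<le> wt lam k + lam 1" by (rule wt_ge)
      then have "int (dg lam k) \<le> int n - 2"
        using a kn unfolding cc WD_def by simp
      have "Exs n (i + int n - 1 - 1) (WD n c) (int (dg lam k))"
      proof (cases "dg lam k = 1")
        case True
        then show ?thesis unfolding Exs_def using hh_0[OF n] n assms(2)
          by (intro exI[of _ 0]) simp
      next
        case False
        define d where "d = int (dg lam k)"
        have d2: "2 \<le> d" using False P(2) cc d_def by simp
        have dn: "d \<le> int n - 2" using \<open>int (dg lam k) \<le> int n - 2\<close> d_def by simp
        have h: "hh n ((d - 1) * (int n - 1)) = d - 1" by (rule hh_mult[OF n d2])
        have "(d - 1) * (WD n c + 1) \<le> (d - 1) * (int n - 1)"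
          using d2 P(3) by (intro mult_left_mono) auto
        then have A: "hh n ((d - 1) * (int n - 1)) * WD n c + d - 1 \<le> (d - 1) * (int n - 1)"
          unfolding h by (simp add: algebra_simps)
        have "(d - 1) * (int n - 1) \<le> (int n - 3) * (int n - 1)"
          using dn n by (intro mult_right_mono) auto
        also have "\<dots> \<le> i + int n - 1 - 1" using assms(3) by (simp add: algebra_simps)
        finally have B: "(d - 1) * (int n - 1) \<le> i + int n - 1 - 1" .
        have "0 \<le> (d - 1) * (int n - 1)" using d2 n by simp
        then have C: "-1 \<le> (d - 1) * (int n - 1)" by simp
        show ?thesis unfolding Exs_def d_def[symmetric] using A B C by blast
      qed
      then show False using NE by simp
    qed
    define a where "a = nat (int n - 1 - WD n c)"
    define b where "b = (lam(1 := lam 1 - a), k)"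
    have Bb: "b \<in> Bset n" unfolding b_def Bset_def using kn k2 z by auto
    have Wb: "WD n b = WD n c" unfolding b_def cc using WD_upd[OF k2] by simp
    have db: "int (dg (fst b) (snd b)) = int (dg lam k) - (int n - 1 - WD n c)"
      unfolding b_def using dg_upd[OF k2, of lam "lam 1 - a"] lam1 P(3) a_def by simp
    have pb: "per n b = c"
      unfolding per_def b_def cc using Wb lam1 a_def by (simp add: b_def cc)
    note pf = per_facts[OF n Bb, unfolded Wb, OF P(3)]
    have NEb: "\<not> Exs n (i - 1) (WD n b) (int (dg (fst b) (snd b)))"
    proof
      assume "Exs n (i - 1) (WD n b) (int (dg (fst b) (snd b)))"
      from S3[OF n this] have "Exs n (i - 1 + int n - 1) (WD n c) (int (dg lam k))"
        using Wb db by (simp add: algebra_simps)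
      then show False using NE by (simp add: algebra_simps)
    qed
    have db1: "1 \<le> dg (fst b) (snd b)"
    proof (rule ccontr)
      assume "\<not> ?thesis"
      then have "dg (fst b) (snd b) = 0" by simp
      then have "Exs n (i - 1) (WD n b) (int (dg (fst b) (snd b)))"
        unfolding Exs_def using hh_m1[OF n] assms(2) by (intro exI[of _ "-1"]) simp
      then show False using NEb by simp
    qed
    have "Exs n i (WD n b) (int (dg (fst b) (snd b)))"
    proof (rule S2[OF n _ _ _ ])
      show "1 \<le> int (dg (fst b) (snd b))" using db1 by simp
      show "0 \<le> WD n b" using Wb W0 by simp
      show "WD n b \<le> int n - 2" using Wb P(3) by simp
      show "Exs n (i + int n - 1) (WD n b) (int (dg (fst b) (snd b)) + (int n - 1) - WD n b)"
        using E Wb db by simp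
    qed
    then have "b \<in> Lset n i" unfolding Lset_def Diff_iff Nset_iff using Bb NEb by blast
    then show ?thesis using pb by blast
  qed
  have "bij_betw (per n) (Lset n i) (Lset n (i + int n - 1))"
    unfolding bij_betw_def using inj fwd surj by blast
  then show ?thesis using part1 by blast
qed

end
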